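(* For every $\alpha\in(0,1)$ and $\gamma\in(0,1)$, define for $\hat\beta>0$ the a.s. unique maximizer $\hat I_{\hat\beta,\infty}=\operatorname{argmax}_{I\in\mathrm{X}}\big(\hat\beta\hat\sigma_\infty(I)-\bar E(I)\big)$ and $\hat\beta_c=\inf\{\hat\beta>0:\hat I_{\hat\beta,\infty}\neq\{0,1\}\}$. Then $\hat\beta_c>0$ almost surely.
   Context: $\mathrm{X}$: closed subsets of $[0,1]$ containing $0$ and $1$, with Hausdorff metric $d_H$. For finite $I=\{0=x_0<x_1<\dots<x_\ell=1\}$, $E(I)=\sum_{i=1}^\ell(x_i-x_{i-1})^\gamma$; for $I\in\mathrm{X}$, $\bar E(I)=\sup_{\delta>0}\inf\{E(J): J\in\mathrm{X}\text{ finite},\,J\ne I,\,d_H(J,I)<\delta\}$. Continuum disorder: $T_i$ is a sum of $i$ i.i.d. exponentials of mean $1$, $M^{(\infty)}_i=T_i^{-1/\alpha}$, $(Y^{(\infty)}_i)$ i.i.d. Uniform$[0,1]$ independent of $(T_i)$, and $\hat\sigma_\infty(I)=\sum_{i\ge1}M^{(\infty)}_i\mathbf 1(Y^{(\infty)}_i\in I)$. Almost surely, for every $\hat\beta\in(0,\infty)$, the maximizer $\hat I_{\hat\beta,\infty}$ exists and is unique. *)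

theory Defs
  imports "HOL-Analysis.Analysis" "HOL-Probability.Probability"
begin

definition Xsp :: "real set set" where
  "Xsp = {I. closed I \<and> I \<subseteq> {0..1} \<and> 0 \<in> I \<and> 1 \<in> I}"

definition hdist :: "real set \<Rightarrow> real set \<Rightarrow> real" where
  "hdist A B = max (SUP a\<in>A. infdist a B) (SUP b\<in>B. infdist b A)"

definition energy :: "real \<Rightarrow> real set \<Rightarrow> real" where
  "energy \<gamma> J = (\<Sum>x\<in>J - {Max J}. (Min {y\<in>J. x < y} - x) powr \<gamma>)"

definition energy_bar :: "real \<Rightarrow> real set \<Rightarrow> ereal" where
  "energy_bar \<gamma> I = (SUP \<delta>\<in>{0<..}.
      INF J\<in>{J. J \<in> Xsp \<and> finite J \<and> J \<noteq> I \<and> hdist J I < \<delta>}. ereal (energy \<gamma> J))"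

text \<open>Continuum disorder. Z n is the (n+1)-th exponential, T_{n+1} = Z 0 + ... + Z n,
  M_{n+1} = T_{n+1} powr (-1/alpha), Y n the (n+1)-th uniform position.\<close>
definition sigma_inf :: "real \<Rightarrow> (nat \<Rightarrow> 'a \<Rightarrow> real) \<Rightarrow> (nat \<Rightarrow> 'a \<Rightarrow> real) \<Rightarrow> 'a \<Rightarrow> real set \<Rightarrow> real" where
  "sigma_inf \<alpha> Z Y \<omega> I = (\<Sum>n. (\<Sum>j\<le>n. Z j \<omega>) powr (-1/\<alpha>) * indicator I (Y n \<omega>))"

definition objective :: "real \<Rightarrow> real \<Rightarrow> (nat \<Rightarrow> 'a \<Rightarrow> real) \<Rightarrow> (nat \<Rightarrow> 'a \<Rightarrow> real) \<Rightarrow> 'a \<Rightarrow> real \<Rightarrow> real set \<Rightarrow> ereal" where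
  "objective \<alpha> \<gamma> Z Y \<omega> \<beta> I = ereal (\<beta> * sigma_inf \<alpha> Z Y \<omega> I) - energy_bar \<gamma> I"

definition maximizer :: "real \<Rightarrow> real \<Rightarrow> (nat \<Rightarrow> 'a \<Rightarrow> real) \<Rightarrow> (nat \<Rightarrow> 'a \<Rightarrow> real) \<Rightarrow> 'a \<Rightarrow> real \<Rightarrow> real set" where
  "maximizer \<alpha> \<gamma> Z Y \<omega> \<beta> = (THE I. I \<in> Xsp \<and>
      (\<forall>J\<in>Xsp. objective \<alpha> \<gamma> Z Y \<omega> \<beta> J \<le> objective \<alpha> \<gamma> Z Y \<omega> \<beta> I))"

definition beta_crit :: "real \<Rightarrow> real \<Rightarrow> (nat \<Rightarrow> 'a \<Rightarrow> real) \<Rightarrow> (nat \<Rightarrow> 'a \<Rightarrow> real) \<Rightarrow> 'a \<Rightarrow> ereal" where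
  "beta_crit \<alpha> \<gamma> Z Y \<omega> = Inf {ereal \<beta> | \<beta>. 0 < \<beta> \<and> maximizer \<alpha> \<gamma> Z Y \<omega> \<beta> \<noteq> {0, 1}}"

end

theory Submission
  imports Defs
begin

lemma powr_subadd:
  fixes u v g :: real
  assumes "0 \<le> u" "0 \<le> v" "0 < g" "g \<le> 1"
  shows "(u+v) powr g \<le> u powr g + v powr g"
proof (cases "u + v = 0")
  case True then show ?thesis using assms by simp
next
  case False
  then have s: "0 < u + v" using assms by linarith
  have l: "x \<le> x powr g" if "0 \<le> x" "x \<le> 1" for x :: real
  proof (cases "x = 0")
    case True then show ?thesis by simp
  next
    case False
    then have "x powr 1 \<le> x powr g" using that assms
      by (intro powr_mono') auto
    then show ?thesis using that by simp
  qed
  have "u/(u+v) \<le> (u/(u+v)) powr g" using assms s by (intro l) auto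
  moreover have "v/(u+v) \<le> (v/(u+v)) powr g" using assms s by (intro l) auto
  moreover have "u/(u+v) + v/(u+v) = 1" using s by (simp add: add_divide_distrib[symmetric])
  ultimately have "1 \<le> (u/(u+v)) powr g + (v/(u+v)) powr g"
    by linarith
  also have "\<dots> = (u powr g + v powr g) / (u+v) powr g"
    using assms s by (simp add: powr_divide add_divide_distrib)
  finally show ?thesis using s by (simp add: le_divide_eq)
qed


lemma energy_step:
  fixes J :: "real set"
  assumes fin: "finite J" and ne: "J - {Max J} \<noteq> {}"
  shows "energy g J = energy g (J - {Max J}) + (Max J - Max (J - {Max J})) powr g"
proof -
  define b where "b = Max J"
  define J' where "J' = J - {b}"
  define m where "m = Max J'"
  have finJ': "finite J'" using fin by (simp add: J'_def)
  have neJ': "J' \<noteq> {}" using ne by (simp add: J'_def b_def)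
  have Jne: "J \<noteq> {}" using ne by auto
  have bJ: "b \<in> J" using fin Jne by (simp add: b_def)
  have mJ': "m \<in> J'" using finJ' neJ' by (simp add: m_def)
  have mb: "m < b"
  proof -
    have "m \<in> J" "m \<noteq> b" using mJ' by (auto simp: J'_def)
    moreover have "m \<le> b" using \<open>m \<in> J\<close> fin by (simp add: b_def)
    ultimately show ?thesis by simp
  qed
  have leb: "y \<le> b" if "y \<in> J" for y using that fin by (simp add: b_def)
  have lem: "y \<le> m" if "y \<in> J'" for y using that finJ' by (simp add: m_def)
  have J'eq: "J' = insert m (J' - {m})" using mJ' by auto
  have fm: "Min {y\<in>J. m < y} = b"
  proof -
    have "{y\<in>J. m < y} = {b}"
    proof safe
      fix y assume "y \<in> J" "m < y"
      then show "y = b" using lem[of y] by (force simp: J'_def)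
    qed (use bJ mb in auto)
    then show ?thesis by simp
  qed
  have fx: "Min {y\<in>J. x < y} = Min {y\<in>J'. x < y}" if x: "x \<in> J' - {m}" for x
  proof -
    have xm: "x < m" using x lem[of x] by auto
    have eq: "{y\<in>J. x < y} = insert b {y\<in>J'. x < y}"
      using bJ xm mb by (auto simp: J'_def)
    have S: "finite {y\<in>J'. x < y}" "{y\<in>J'. x < y} \<noteq> {}" using finJ' mJ' xm by auto
    have "Min {y\<in>J'. x < y} \<le> m" using S mJ' xm by (intro Min_le) auto
    then show ?thesis unfolding eq using S mb by (simp add: Min_insert)
  qed
  have "energy g J = (\<Sum>x\<in>J'. (Min {y\<in>J. x < y} - x) powr g)"
    by (simp add: energy_def J'_def b_def)
  also have "\<dots> = (Min {y\<in>J. m < y} - m) powr g + (\<Sum>x\<in>J' - {m}. (Min {y\<in>J. x < y} - x) powr g)"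
    using finJ' mJ' by (subst J'eq) (simp add: sum.insert_remove)
  also have "(\<Sum>x\<in>J' - {m}. (Min {y\<in>J. x < y} - x) powr g) = energy g J'"
    unfolding energy_def m_def[symmetric] using fx by (intro sum.cong) auto
  finally show ?thesis using fm by (simp add: J'_def b_def m_def)
qed


lemma energy_lower:
  fixes J :: "real set"
  assumes "finite J" "y \<in> J" "0 < g" "g \<le> 1"
  shows "(y - Min J) powr g + (Max J - y) powr g \<le> energy g J"
  using assms(1,2)
proof (induction "card J" arbitrary: J y rule: less_induct)
  case less
  note fin = less.prems(1) and yJ = less.prems(2)
  define b where "b = Max J"
  define J' where "J' = J - {b}"
  have Jne: "J \<noteq> {}" using yJ by auto
  have bJ: "b \<in> J" using fin Jne by (simp add: b_def)
  have leb: "z \<le> b" if "z \<in> J" for z using that fin by (simp add: b_def)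
  have gea: "Min J \<le> z" if "z \<in> J" for z using that fin by simp
  show ?case
  proof (cases "J' = {}")
    case True
    then have "J = {b}" using bJ by (auto simp: J'_def)
    then show ?thesis using yJ by (simp add: energy_def)
  next
    case False
    define m where "m = Max J'"
    have finJ': "finite J'" using fin by (simp add: J'_def)
    have mJ': "m \<in> J'" using finJ' False by (simp add: m_def)
    have lem: "z \<le> m" if "z \<in> J'" for z using that finJ' by (simp add: m_def)
    have mb: "m < b" using mJ' leb[of m] by (auto simp: J'_def)
    have card: "card J' < card J" using fin bJ unfolding J'_def by (meson card_Diff1_less)
    have minJ: "Min J \<in> J" using fin Jne by simp
    have "Min J \<le> m" using gea mJ' by (auto simp: J'_def)
    then have "Min J \<noteq> b" using mb by auto
    then have minJ': "Min J \<in> J'" using minJ by (simp add: J'_def)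
    have minEq: "Min J' = Min J"
    proof (rule antisym)
      show "Min J' \<le> Min J" using finJ' minJ' by simp
      show "Min J \<le> Min J'" using finJ' False gea by (auto simp: J'_def)
    qed
    have step: "energy g J = energy g J' + (b - m) powr g"
      using energy_step[OF fin] False by (simp add: J'_def b_def m_def)
    have am: "Min J \<le> m" by fact
    show ?thesis
    proof (cases "y = b")
      case True
      have IH: "(m - Min J') powr g + (Max J' - m) powr g \<le> energy g J'"
        using less.hyps[OF _ finJ' mJ'] card by (simp add: J'_def b_def)
      have "(b - Min J) powr g = ((m - Min J) + (b - m)) powr g" by simp
      also have "\<dots> \<le> (m - Min J) powr g + (b - m) powr g"
        using am mb assms by (intro powr_subadd) auto
      finally show ?thesis using IH step True minEq by (simp add: m_def[symmetric] b_def[symmetric])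
    next
      case False
      then have yJ': "y \<in> J'" using yJ by (simp add: J'_def)
      have IH: "(y - Min J') powr g + (Max J' - y) powr g \<le> energy g J'"
        using less.hyps[OF _ finJ' yJ'] card by (simp add: J'_def b_def)
      have ym: "y \<le> m" using lem yJ' by simp
      have "(b - y) powr g = ((m - y) + (b - m)) powr g" by simp
      also have "\<dots> \<le> (m - y) powr g + (b - m) powr g"
        using ym mb assms by (intro powr_subadd) auto
      finally show ?thesis using IH step minEq by (simp add: m_def[symmetric] b_def[symmetric])
    qed
  qed
qed


definition dd :: "real \<Rightarrow> real" where "dd y = min y (1 - y)"

lemma powr_ge_self: fixes x g :: real assumes "0 \<le> x" "x \<le> 1" "0 < g" "g \<le> 1"
  shows "x \<le> x powr g"
proof (cases "x = 0")
  case True then show ?thesis by simp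
next
  case False
  then have "x powr 1 \<le> x powr g" using assms by (intro powr_mono') auto
  then show ?thesis using assms by simp
qed

lemma gap_half: fixes y g :: real
  assumes "0 \<le> y" "y \<le> 1/2" "0 < g" "g < 1"
  shows "1 + (1 - (1/2) powr (1-g)) * y powr g \<le> y powr g + (1-y) powr g"
proof -
  have a: "1 - y \<le> (1-y) powr g" using assms by (intro powr_ge_self) auto
  have b: "y \<le> y powr g * (1/2) powr (1-g)"
  proof (cases "y = 0")
    case True then show ?thesis by simp
  next
    case False
    have "y = y powr g * y powr (1-g)" using False assms by (simp add: powr_add[symmetric])
    also have "\<dots> \<le> y powr g * (1/2) powr (1-g)"
      using assms by (intro mult_left_mono powr_mono2) auto
    finally show ?thesis .
  qed
  show ?thesis using a b by (simp add: algebra_simps)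
qed

lemma gap_dd: fixes y g :: real
  assumes "0 \<le> y" "y \<le> 1" "0 < g" "g < 1"
  shows "1 + (1 - (1/2) powr (1-g)) * dd y powr g \<le> y powr g + (1-y) powr g"
proof (cases "y \<le> 1/2")
  case True
  then show ?thesis using gap_half[of y g] assms by (simp add: dd_def)
next
  case False
  then have "dd y = 1 - y" by (simp add: dd_def)
  then show ?thesis using gap_half[of "1-y" g] assms False by simp
qed

lemma Xsp_Min_Max: assumes "J \<in> Xsp" "finite J" shows "Min J = 0" "Max J = 1"
proof -
  have J: "J \<subseteq> {0..1}" "0 \<in> J" "1 \<in> J" using assms by (auto simp: Xsp_def)
  show "Min J = 0" using J assms(2) by (intro Min_eqI) auto
  show "Max J = 1" using J assms(2) by (intro Max_eqI) auto
qed

lemma energy_finite_lower: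
  assumes "J \<in> Xsp" "finite J" "z \<in> J" "0 < g" "g < 1"
  shows "1 + (1 - (1/2) powr (1-g)) * dd z powr g \<le> energy g J"
proof -
  have "z \<in> {0..1}" using assms by (auto simp: Xsp_def)
  then have "1 + (1 - (1/2) powr (1-g)) * dd z powr g \<le> z powr g + (1-z) powr g"
    using assms by (intro gap_dd) auto
  also have "\<dots> \<le> energy g J" using energy_lower[of J z g] assms Xsp_Min_Max[OF assms(1,2)] by simp
  finally show ?thesis .
qed

lemma infdist_le_hdist:
  assumes "J \<in> Xsp" "I \<in> Xsp" "x \<in> I"
  shows "infdist x J \<le> hdist J I"
proof -
  have J0: "0 \<in> J" using assms by (auto simp: Xsp_def)
  have "bdd_above ((\<lambda>b. infdist b J) ` I)"
  proof (rule bdd_aboveI2)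
    fix b assume "b \<in> I"
    then have "b \<in> {0..1}" using assms by (auto simp: Xsp_def)
    then show "infdist b J \<le> 1" using infdist_le[OF J0, of b] by (auto simp: dist_real_def)
  qed
  then have "infdist x J \<le> (SUP b\<in>I. infdist b J)" using assms by (intro cSUP_upper) auto
  then show ?thesis unfolding hdist_def by linarith
qed

lemma ebar_lower:
  assumes "I \<in> Xsp" "x \<in> I" "0 < x" "x < 1" "0 < g" "g < 1"
  shows "ereal (1 + (1 - (1/2) powr (1-g)) * (dd x / 2) powr g) \<le> energy_bar g I"
proof -
  define c where "c = 1 - (1/2) powr (1-g)"
  have c0: "0 \<le> c" using assms unfolding c_def by (simp add: powr_le1)
  define \<delta> where "\<delta> = dd x / 2"
  have d0: "0 < \<delta>" using assms by (simp add: \<delta>_def dd_def)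
  have "ereal (1 + c * \<delta> powr g) \<le>
      (INF J\<in>{J. J \<in> Xsp \<and> finite J \<and> J \<noteq> I \<and> hdist J I < \<delta>}. ereal (energy g J))"
  proof (rule INF_greatest)
    fix J assume J: "J \<in> {J. J \<in> Xsp \<and> finite J \<and> J \<noteq> I \<and> hdist J I < \<delta>}"
    then have JX: "J \<in> Xsp" "finite J" by auto
    have "infdist x J < \<delta>" using infdist_le_hdist[OF JX(1) assms(1,2)] J by auto
    moreover have "J \<noteq> {}" using JX by (auto simp: Xsp_def)
    moreover have "closed J" using JX by (auto simp: Xsp_def)
    ultimately obtain z where z: "z \<in> J" "dist x z < \<delta>"
      using infdist_attains_inf[of J x] by metis
    have "\<delta> \<le> dd z" using z(2) unfolding \<delta>_def dd_def dist_real_def by (auto simp: min_def abs_if split: if_splits)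
    then have "\<delta> powr g \<le> dd z powr g" using d0 assms by (intro powr_mono2) auto
    then have "1 + c * \<delta> powr g \<le> 1 + c * dd z powr g" using c0 by (simp add: mult_left_mono)
    also have "\<dots> \<le> energy g J" unfolding c_def using energy_finite_lower[OF JX z(1)] assms by simp
    finally show "ereal (1 + c * \<delta> powr g) \<le> ereal (energy g J)" by simp
  qed
  also have "\<dots> \<le> energy_bar g I" unfolding energy_bar_def using d0 by (intro SUP_upper) auto
  finally show ?thesis by (simp add: c_def \<delta>_def)
qed


lemma energy_three:
  fixes t g :: real assumes "0 < t" "t < 1"
  shows "energy g {0, t, 1} = t powr g + (1 - t) powr g"
proof -
  define S where "S = {0, t, 1::real}"
  have mx: "Max S = (1::real)" using assms unfolding S_def by (intro Max_eqI) auto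
  have e: "S - {1} = {0, t::real}" using assms unfolding S_def by auto
  have s1: "{y \<in> S. 0 < y} = {t, 1::real}" using assms unfolding S_def by auto
  have s2: "{y \<in> S. t < y} = {1::real}" using assms unfolding S_def by auto
  have m1: "Min {t, 1::real} = t" using assms by (intro Min_eqI) auto
  have "energy g S = (\<Sum>x\<in>{0,t}. (Min {y\<in>S. x < y} - x) powr g)"
    unfolding energy_def mx e ..
  also have "\<dots> = (Min {y\<in>S. 0 < y} - 0) powr g + (Min {y\<in>S. t < y} - t) powr g"
    using assms by (subst sum.insert) auto
  also have "\<dots> = t powr g + (1 - t) powr g" unfolding s1 s2 m1 by simp
  finally show ?thesis unfolding S_def .
qed

lemma hdist_three:
  fixes t :: real assumes "0 < t" "t < 1"
  shows "hdist {0, t, 1} {0, 1} \<le> t"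
proof -
  have a: "(SUP a\<in>{0, t, 1}. infdist a {0, 1}) \<le> t"
  proof (rule cSUP_least)
    fix a :: real assume "a \<in> {0, t, 1}"
    then show "infdist a {0, 1} \<le> t"
      using assms infdist_le[of 0 "{0,1::real}" a] infdist_le[of 1 "{0,1::real}" a]
      by (auto simp: dist_real_def)
  qed auto
  have b: "(SUP a\<in>{0, 1}. infdist a {0, t, 1}) \<le> t"
  proof (rule cSUP_least)
    fix a :: real assume "a \<in> {0, 1}"
    then show "infdist a {0, t, 1} \<le> t"
      using assms infdist_le[of 0 "{0,t,1::real}" a] infdist_le[of 1 "{0,t,1::real}" a]
      by (auto simp: dist_real_def)
  qed auto
  show ?thesis unfolding hdist_def using a b by simp
qed

lemma ebar_01: assumes "0 < g" shows "energy_bar g {0, 1} \<le> 1"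
  unfolding energy_bar_def
proof (rule SUP_least)
  fix \<delta> :: real assume "\<delta> \<in> {0<..}"
  then have d: "0 < \<delta>" by simp
  show "(INF J\<in>{J. J \<in> Xsp \<and> finite J \<and> J \<noteq> {0, 1} \<and> hdist J {0, 1} < \<delta>}. ereal (energy g J)) \<le> 1"
  proof (rule ereal_le_epsilon2)
    fix e :: real assume e: "0 < e"
    define t where "t = min (\<delta>/2) (min (1/2) (e powr (1/g)))"
    have t0: "0 < t" "t < \<delta>" "t \<le> 1/2" using d e by (auto simp: t_def)
    have "t powr g \<le> (e powr (1/g)) powr g" using t0 e assms
      by (intro powr_mono2) (auto simp: t_def)
    also have "\<dots> = e" using assms e by (simp add: powr_powr)
    finally have te: "t powr g \<le> e" .
    have J: "{0, t, 1} \<in> {J. J \<in> Xsp \<and> finite J \<and> J \<noteq> {0, 1} \<and> hdist J {0, 1} < \<delta>}"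
    proof -
      have "t \<in> {0, t, 1}" "t \<notin> {0, 1::real}" using t0 by auto
      then have "{0, t, 1} \<noteq> {0, 1::real}" by blast
      then show ?thesis using t0 hdist_three[of t] by (auto simp: Xsp_def)
    qed
    have "(INF J\<in>{J. J \<in> Xsp \<and> finite J \<and> J \<noteq> {0, 1} \<and> hdist J {0, 1} < \<delta>}. ereal (energy g J))
        \<le> ereal (energy g {0, t, 1})" by (rule INF_lower[OF J])
    also have "energy g {0, t, 1} = t powr g + (1 - t) powr g" using t0 by (intro energy_three) auto
    also have "(1 - t) powr g \<le> 1" using t0 assms by (intro powr_le1) auto
    then have "ereal (t powr g + (1 - t) powr g) \<le> 1 + ereal e" using te by simp
    finally show "(INF J\<in>{J. J \<in> Xsp \<and> finite J \<and> J \<noteq> {0, 1} \<and> hdist J {0, 1} < \<delta>}. ereal (energy g J)) \<le> 1 + ereal e" .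
  qed
qed


lemma ereal_minus_lt:
  fixes e :: ereal and a r :: real
  assumes "ereal r \<le> e" "a + 1 < r"
  shows "ereal a - e < -1"
  using assms by (cases e) (auto simp: one_ereal_def)

lemma det_main:
  fixes Z Y :: "nat \<Rightarrow> 'a \<Rightarrow> real" and \<omega> :: 'a and \<alpha> g :: real
  assumes g: "0 < g" "g < 1"
    and Y01: "\<And>n. Y n \<omega> \<in> {0<..<1}"
    and summ: "summable (\<lambda>n. (\<Sum>j\<le>n. Z j \<omega>) powr (-1/\<alpha>) * dd (Y n \<omega>) powr (-g))"
  shows "0 < beta_crit \<alpha> g Z Y \<omega>"
proof -
  define m where "m n = (\<Sum>j\<le>n. Z j \<omega>) powr (-1/\<alpha>)" for n
  define y where "y n = Y n \<omega>" for n
  have m0: "0 \<le> m n" for n by (simp add: m_def)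
  have y01: "0 < y n" "y n < 1" for n using Y01[of n] by (auto simp: y_def)
  have sW: "summable (\<lambda>n. m n * dd (y n) powr (-g))" using summ by (simp add: m_def y_def)
  define W where "W = (\<Sum>n. m n * dd (y n) powr (-g))"
  have W0: "0 \<le> W" unfolding W_def using sW m0 by (intro suminf_nonneg) auto
  define c where "c = 1 - (1/2) powr (1-g)"
  have "(1/2::real) powr (1-g) < 1 powr (1-g)" using g by (intro powr_less_mono2) auto
  then have c0: "0 < c" by (simp add: c_def)
  define c' where "c' = c * (1/2) powr g"
  have c'0: "0 < c'" using c0 by (simp add: c'_def)
  define \<beta>0 where "\<beta>0 = c' / (W + 1)"
  have b00: "0 < \<beta>0" using c'0 W0 by (simp add: \<beta>0_def)
  have sig: "sigma_inf \<alpha> Z Y \<omega> I = (\<Sum>n. m n * indicator I (y n))" for I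
    by (simp add: sigma_inf_def m_def y_def)
  have main: "maximizer \<alpha> g Z Y \<omega> \<beta> = {0, 1}" if b: "0 < \<beta>" "\<beta> < \<beta>0" for \<beta>
  proof -
    define obj where "obj = objective \<alpha> g Z Y \<omega> \<beta>"
    have bW: "\<beta> * W < c'"
    proof -
      have "\<beta> * (W + 1) < \<beta>0 * (W + 1)" using b W0 by (intro mult_strict_right_mono) auto
      also have "\<dots> = c'" using W0 by (simp add: \<beta>0_def)
      finally show ?thesis using b by (simp add: algebra_simps)
    qed
    have obj01: "-1 \<le> obj {0, 1}"
    proof -
      have "sigma_inf \<alpha> Z Y \<omega> {0, 1} = 0" unfolding sig using y01
        by (simp add: indicator_def less_le)
      then show ?thesis using ebar_01[OF g(1)] unfolding obj_def objective_def
        by (cases "energy_bar g {0, 1}") (auto simp: one_ereal_def)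
    qed
    have objI: "obj I < -1" if I: "I \<in> Xsp" "I \<noteq> {0, 1}" for I
    proof -
      have Isub: "I \<subseteq> {0..1}" "closed I" "0 \<in> I" "1 \<in> I" using I by (auto simp: Xsp_def)
      have "compact I" using Isub by (meson bounded_closed_interval bounded_subset compact_eq_bounded_closed)
      moreover have "continuous_on I dd" unfolding dd_def by (intro continuous_intros)
      ultimately obtain x where xI: "x \<in> I" and xmax: "\<And>z. z \<in> I \<Longrightarrow> dd z \<le> dd x"
        using continuous_attains_sup[of I dd] Isub by blast
      obtain z where z: "z \<in> I" "z \<notin> {0, 1}" using I Isub by blast
      then have "0 < dd z" using Isub by (auto simp: dd_def)
      then have dx: "0 < dd x" using xmax[OF z(1)] by simp
      have x01: "0 < x" "x < 1" using dx xI Isub by (auto simp: dd_def)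
      define D where "D = dd x powr g"
      have D0: "0 < D" using dx by (simp add: D_def)
      have trm: "m n * indicator I (y n) \<le> m n * dd (y n) powr (-g) * D" for n
      proof (cases "y n \<in> I")
        case False then show ?thesis using m0[of n] D0 by simp
      next
        case True
        have dy: "0 < dd (y n)" using y01[of n] by (simp add: dd_def)
        have "dd (y n) powr g \<le> dd x powr g" using xmax[OF True] dy g by (intro powr_mono2) auto
        then have "1 \<le> dd (y n) powr (-g) * D" using dy
          by (simp add: D_def powr_minus field_simps)
        then show ?thesis using True m0[of n] by (simp add: mult.assoc) (metis mult.right_neutral mult_left_mono)
      qed
      have sR: "summable (\<lambda>n. m n * dd (y n) powr (-g) * D)" using sW by (rule summable_mult2)
      have sL: "summable (\<lambda>n. m n * indicator I (y n))"
        by (rule summable_comparison_test[OF _ sR]) (use trm m0 in \<open>auto simp: indicator_def\<close>)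
      have sI: "sigma_inf \<alpha> Z Y \<omega> I \<le> W * D"
        unfolding sig W_def using suminf_le[OF trm sL sR] suminf_mult2[OF sW, of D] by simp
      have eb: "ereal (1 + c * (dd x / 2) powr g) \<le> energy_bar g I"
        using ebar_lower[OF I(1) xI x01 g] by (simp add: c_def)
      have "(dd x / 2) powr g = (1/2) powr g * D"
        using dx by (simp add: D_def powr_mult[symmetric])
      then have eb': "ereal (1 + c' * D) \<le> energy_bar g I" using eb by (simp add: c'_def mult.assoc)
      have "\<beta> * sigma_inf \<alpha> Z Y \<omega> I \<le> \<beta> * W * D"
        using sI b by (simp add: mult.assoc mult_left_mono)
      also have "\<dots> < c' * D" using bW D0 by (simp add: mult_strict_right_mono)
      finally have "\<beta> * sigma_inf \<alpha> Z Y \<omega> I + 1 < 1 + c' * D" by simp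
      then show ?thesis unfolding obj_def objective_def by (rule ereal_minus_lt[OF eb'])
    qed
    have X01: "{0, 1} \<in> Xsp" by (auto simp: Xsp_def)
    show ?thesis unfolding maximizer_def obj_def[symmetric]
    proof (rule the_equality)
      show "{0, 1} \<in> Xsp \<and> (\<forall>J\<in>Xsp. obj J \<le> obj {0, 1})"
        using X01 objI obj01 by (metis order.strict_implies_order order.strict_trans2 order.refl)
    next
      fix I assume "I \<in> Xsp \<and> (\<forall>J\<in>Xsp. obj J \<le> obj I)"
      then show "I = {0, 1}" using X01 objI obj01 by (meson leD order.strict_trans2)
    qed
  qed
  have "ereal \<beta>0 \<le> beta_crit \<alpha> g Z Y \<omega>"
    unfolding beta_crit_def
  proof (rule Inf_greatest)
    fix x assume "x \<in> {ereal \<beta> | \<beta>. 0 < \<beta> \<and> maximizer \<alpha> g Z Y \<omega> \<beta> \<noteq> {0, 1}}"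
    then obtain \<beta> where "x = ereal \<beta>" "0 < \<beta>" "maximizer \<alpha> g Z Y \<omega> \<beta> \<noteq> {0, 1}" by auto
    then show "ereal \<beta>0 \<le> x" using main by force
  qed
  then show ?thesis using b00 by (meson ereal_less(2) order.strict_trans2)
qed


lemma (in prob_space) indep_sets_reindex:
  assumes ind: "indep_sets F (f ` I)" and inj: "inj_on f I"
  shows "indep_sets (\<lambda>i. F (f i)) I"
  unfolding indep_sets_def
proof (intro conjI ballI allI impI)
  fix i assume "i \<in> I" then show "F (f i) \<subseteq> events" using ind by (auto simp: indep_sets_def)
next
  fix J A assume J: "J \<subseteq> I" "J \<noteq> {}" "finite J" and A: "A \<in> (\<Pi> j\<in>J. F (f j))"
  define A' where "A' k = A (the_inv_into J f k)" for k
  have inJ: "inj_on f J" using inj J by (meson inj_on_subset)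
  have A'f: "A' (f j) = A j" if "j \<in> J" for j using that inJ by (simp add: A'_def the_inv_into_f_f)
  have "A' \<in> (\<Pi> k\<in>f ` J. F k)" using A A'f by auto
  then have "prob (\<Inter>k\<in>f ` J. A' k) = (\<Prod>k\<in>f ` J. prob (A' k))"
    using ind J unfolding indep_sets_def by (metis finite_imageI image_is_empty image_mono)
  moreover have "(\<Inter>k\<in>f ` J. A' k) = (\<Inter>j\<in>J. A j)" using A'f by auto
  moreover have "(\<Prod>k\<in>f ` J. prob (A' k)) = (\<Prod>j\<in>J. prob (A j))"
    using inJ A'f by (simp add: prod.reindex)
  ultimately show "prob (\<Inter>j\<in>J. A j) = (\<Prod>j\<in>J. prob (A j))" by simp
qed

lemma (in prob_space) indep_Z:
  assumes "indep_vars (\<lambda>_. borel) (case_sum Z Y) UNIV"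
  shows "indep_vars (\<lambda>_. borel) Z UNIV"
proof -
  have rv: "\<forall>i. random_variable borel (case_sum Z Y i)" using assms by (simp add: indep_vars_def2)
  have "indep_sets (\<lambda>k. {case_sum Z Y k -` A \<inter> space M | A. A \<in> sets borel}) (range Inl)"
    using assms unfolding indep_vars_def2 by (auto intro: indep_sets_mono_index)
  then have "indep_sets (\<lambda>i. {case_sum Z Y (Inl i) -` A \<inter> space M | A. A \<in> sets borel}) UNIV"
    by (rule indep_sets_reindex) simp
  moreover have "\<forall>i. random_variable borel (Z i)" using rv[rule_format, of "Inl i" for i] by simp
  ultimately show ?thesis by (simp add: indep_vars_def2)
qed


lemma erlang_exp_eq:
  "ennreal (erlang_density n 1 x) * ennreal (exp (- x)) = ennreal (1 / 2^(n+1)) * ennreal (erlang_density n 2 x * x ^ 0)"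
proof -
  have "erlang_density n 1 x * exp (- x) = 1 / 2^(n+1) * (erlang_density n 2 x * x ^ 0)"
  proof (cases "x < 0")
    case True then show ?thesis by (simp add: erlang_density_def)
  next
    case False
    have "exp (- (2 * x)) = exp (-x) * exp (-x)" by (simp add: exp_add[symmetric])
    then show ?thesis using False by (simp add: erlang_density_def field_simps)
  qed
  then show ?thesis by (simp add: ennreal_mult[symmetric] erlang_density_def)
qed

lemma (in prob_space) T_small:
  assumes Zd: "\<And>n. distributed M lborel (Z n) (exponential_density 1)"
    and indZ: "indep_vars (\<lambda>_. borel) Z UNIV"
  shows "emeasure M {\<omega>\<in>space M. (\<Sum>j\<le>n. Z j \<omega>) \<le> (real n + 1)/2} \<le> ennreal ((exp (1/2) / 2)^(n+1))"
proof -
  define T where "T \<omega> = (\<Sum>j\<le>n. Z j \<omega>)" for \<omega>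
  define a where "a = (real n + 1)/2"
  have TD: "distributed M lborel T (erlang_density n 1)"
    using exponential_distributed_sum[of "{..n}" 1 Z] Zd indep_vars_subset[OF indZ]
    unfolding T_def by auto
  have Tm[measurable]: "T \<in> borel_measurable M" using distributed_measurable[OF TD] by simp
  have "emeasure M {\<omega>\<in>space M. T \<omega> \<le> a} = (\<integral>\<^sup>+\<omega>. indicator {\<omega>\<in>space M. T \<omega> \<le> a} \<omega> \<partial>M)"
    by (simp add: nn_integral_indicator)
  also have "\<dots> \<le> (\<integral>\<^sup>+\<omega>. ennreal (exp a) * ennreal (exp (- T \<omega>)) \<partial>M)"
  proof (rule nn_integral_mono)
    fix \<omega> assume "\<omega> \<in> space M"
    show "indicator {\<omega>\<in>space M. T \<omega> \<le> a} \<omega> \<le> ennreal (exp a) * ennreal (exp (- T \<omega>))"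
    proof (cases "T \<omega> \<le> a")
      case True
      have "1 \<le> exp a * exp (- T \<omega>)" using True by (simp add: exp_add[symmetric])
      then show ?thesis by (simp add: ennreal_mult[symmetric] indicator_def)
    qed (simp add: indicator_def)
  qed
  also have "\<dots> = ennreal (exp a) * (\<integral>\<^sup>+\<omega>. ennreal (exp (- T \<omega>)) \<partial>M)"
    by (rule nn_integral_cmult) simp
  also have "(\<integral>\<^sup>+\<omega>. ennreal (exp (- T \<omega>)) \<partial>M) = (\<integral>\<^sup>+x. ennreal (erlang_density n 1 x) * ennreal (exp (- x)) \<partial>lborel)"
    using distributed_nn_integral[OF TD, of "\<lambda>x. ennreal (exp (- x))"] by simp
  also have "\<dots> = (\<integral>\<^sup>+x. ennreal (1 / 2^(n+1)) * ennreal (erlang_density n 2 x * x ^ 0) \<partial>lborel)"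
    by (simp only: erlang_exp_eq)
  also have "\<dots> = ennreal (1 / 2^(n+1)) * (\<integral>\<^sup>+x. ennreal (erlang_density n 2 x * x ^ 0) \<partial>lborel)"
    by (rule nn_integral_cmult) simp
  also have "(\<integral>\<^sup>+x. ennreal (erlang_density n 2 x * x ^ 0) \<partial>lborel) = 1"
    using nn_integral_erlang_ith_moment[of 2 n 0] by simp
  also have "ennreal (exp a) * (ennreal (1 / 2^(n+1)) * 1) = ennreal ((exp (1/2) / 2)^(n+1))"
  proof -
    have "exp a = exp (1/2) ^ (n+1)" unfolding a_def
      by (subst exp_of_nat_mult[symmetric]) (simp add: field_simps)
    then show ?thesis by (simp add: ennreal_mult[symmetric] power_divide)
  qed
  finally show ?thesis by (simp add: T_def a_def)
qed

lemma (in prob_space) T_eventually: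
  assumes Zd: "\<And>n. distributed M lborel (Z n) (exponential_density 1)"
    and indZ: "indep_vars (\<lambda>_. borel) Z UNIV"
  shows "AE \<omega> in M. eventually (\<lambda>n. (real n + 1)/2 < (\<Sum>j\<le>n. Z j \<omega>)) sequentially"
proof -
  define A where "A n = {\<omega>\<in>space M. (\<Sum>j\<le>n. Z j \<omega>) \<le> (real n + 1)/2}" for n
  have Zm[measurable]: "Z n \<in> borel_measurable M" for n using distributed_measurable[OF Zd[of n]] by simp
  have Am[measurable]: "A n \<in> sets M" for n unfolding A_def by measurable
  define q where "q = exp (1/2) / (2::real)"
  have q0: "0 \<le> q" by (simp add: q_def)
  have "exp (1/2::real) ^ 2 = exp 1" by (simp add: exp_of_nat_mult[symmetric])
  also have "\<dots> < 2 ^ 2" using e_less_272 by simp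
  finally have "exp (1/2::real) < 2" by (rule power_less_imp_less_base) auto
  then have q1: "q < 1" by (simp add: q_def)
  have mA: "measure M (A n) \<le> q^(n+1)" for n
    using T_small[OF Zd indZ, of n] q0 by (simp add: A_def q_def emeasure_eq_measure)
  have "summable (\<lambda>n. q^(n+1))" using q0 q1 by (simp add: summable_geometric)
  then have "summable (\<lambda>n. measure M (A n))"
    by (rule summable_comparison_test[rotated]) (use mA in auto)
  then have "AE \<omega> in M. eventually (\<lambda>n. \<omega> \<in> space M - A n) sequentially"
    by (intro borel_cantelli_AE1) (auto simp: emeasure_eq_measure)
  then show ?thesis
    by eventually_elim (auto elim!: eventually_mono simp: A_def not_le)
qed


lemma int_powr01:
  fixes g :: real assumes "0 < g" "g < 1"
  shows "(\<integral>\<^sup>+x. ennreal (indicator {0..1} x * x powr (-g)) \<partial>lborel) = ennreal (1 / (1 - g))"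
proof -
  have "((\<lambda>x::real. x powr (-g)) has_integral (1 / (1 - g))) {0..1}"
    using has_integral_powr_from_0[of "-g" 1] assms by simp
  then have "((\<lambda>x::real. if x \<in> {0..1} then x powr (-g) else 0) has_integral (1 / (1 - g))) UNIV"
    by (simp only: has_integral_restrict_UNIV)
  moreover have "(\<lambda>x::real. if x \<in> {0..1} then x powr (-g) else 0) = (\<lambda>x. indicator {0..1} x * x powr (-g))"
    by (auto simp: indicator_def)
  ultimately have I: "((\<lambda>x. indicator {0..1} x * x powr (-g)) has_integral (1 / (1 - g))) UNIV" by simp
  show ?thesis
    by (rule nn_integral_has_integral_lborel[OF _ _ I]) auto
qed

lemma int_powr01':
  fixes g :: real assumes "0 < g" "g < 1"
  shows "(\<integral>\<^sup>+x. ennreal (indicator {0..1} x * (1 - x) powr (-g)) \<partial>lborel) = ennreal (1 / (1 - g))"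
proof -
  have "(\<integral>\<^sup>+x. ennreal (indicator {0..1} x * (1 - x) powr (-g)) \<partial>lborel) =
      ennreal \<bar>-1::real\<bar> * (\<integral>\<^sup>+x. ennreal (indicator {0..1} (1 + -1 * x) * (1 - (1 + -1 * x)) powr (-g)) \<partial>lborel)"
    by (rule nn_integral_real_affine) auto
  also have "(\<lambda>x::real. ennreal (indicator {0..1} (1 + -1 * x) * (1 - (1 + -1 * x)) powr (-g))) =
      (\<lambda>x. ennreal (indicator {0..1} x * x powr (-g)))"
    by (auto simp: indicator_def)
  finally show ?thesis using int_powr01[OF assms] by simp
qed

lemma K_finite:
  fixes g :: real assumes "0 < g" "g < 1"
  shows "(\<integral>\<^sup>+x. ennreal (indicator {0..1} x / measure lborel {0..1::real}) * ennreal (dd x powr (-g)) \<partial>lborel) < \<infinity>"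
proof -
  have "(\<integral>\<^sup>+x. ennreal (indicator {0..1} x / measure lborel {0..1::real}) * ennreal (dd x powr (-g)) \<partial>lborel)
     \<le> (\<integral>\<^sup>+x. ennreal (indicator {0..1} x * x powr (-g)) + ennreal (indicator {0..1} x * (1 - x) powr (-g)) \<partial>lborel)"
  proof (rule nn_integral_mono)
    fix x :: real
    have "indicator {0..1} x * dd x powr (-g) \<le> indicator {0..1} x * x powr (-g) + indicator {0..1} x * (1 - x) powr (-g)"
      by (auto simp: indicator_def dd_def min_def)
    then show "ennreal (indicator {0..1} x / measure lborel {0..1::real}) * ennreal (dd x powr (-g))
        \<le> ennreal (indicator {0..1} x * x powr (-g)) + ennreal (indicator {0..1} x * (1 - x) powr (-g))"
      by (simp add: ennreal_mult[symmetric] ennreal_plus[symmetric] del: ennreal_plus)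
  qed
  also have "\<dots> = ennreal (1 / (1 - g)) + ennreal (1 / (1 - g))"
    by (subst nn_integral_add) (auto simp: int_powr01[OF assms] int_powr01'[OF assms])
  also have "\<dots> < \<infinity>" by simp
  finally show ?thesis .
qed

lemma (in prob_space) Y_in01:
  fixes X :: "'a \<Rightarrow> real"
  assumes Yd: "distributed M lborel X (\<lambda>x. indicator {0..1} x / measure lborel {0..1::real})"
  shows "AE \<omega> in M. X \<omega> \<in> {0<..<1}"
proof -
  have "AE x in lborel. x \<noteq> (0::real)" "AE x in lborel. x \<noteq> (1::real)" by (rule AE_lborel_singleton)+
  then have "AE x in lborel. 0 < ennreal (indicator {0..1} (x::real) / measure lborel {0..1::real}) \<longrightarrow> x \<in> {0<..<1}"
    by eventually_elim (auto simp: indicator_def)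
  then have ae1: "AE x in density lborel (\<lambda>x. ennreal (indicator {0..1} (x::real) / measure lborel {0..1::real})). x \<in> {0<..<1}"
    by (subst AE_density) auto
  have eq: "distr M lborel X = density lborel (\<lambda>x. ennreal (indicator {0..1} (x::real) / measure lborel {0..1::real}))"
    using distributed_distr_eq_density[OF Yd] .
  have "AE x in distr M lborel X. x \<in> {0<..<1}" unfolding eq by (rule ae1)
  then show ?thesis by (rule AE_distrD[OF distributed_measurable[OF Yd]])
qed


lemma dd_meas[measurable]: "dd \<in> borel_measurable borel"
  unfolding dd_def by measurable

lemma (in prob_space) Y_weighted:
  fixes Y :: "nat \<Rightarrow> 'a \<Rightarrow> real" and a :: "nat \<Rightarrow> real"
  assumes Yd: "\<And>n. distributed M lborel (Y n) (\<lambda>x. indicator {0..1} x / measure lborel {0..1::real})"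
    and a0: "\<And>n. 0 \<le> a n" and sa: "summable a" and g: "0 < g" "g < 1"
  shows "AE \<omega> in M. summable (\<lambda>n. a n * dd (Y n \<omega>) powr (-g))"
proof -
  define K where "K = (\<integral>\<^sup>+x. ennreal (indicator {0..1} x / measure lborel {0..1::real}) * ennreal (dd x powr (-g)) \<partial>lborel)"
  have K: "K < \<infinity>" unfolding K_def by (rule K_finite[OF g])
  have Ym[measurable]: "Y n \<in> borel_measurable M" for n using distributed_measurable[OF Yd[of n]] by simp
  have In: "(\<integral>\<^sup>+\<omega>. ennreal (a n * dd (Y n \<omega>) powr (-g)) \<partial>M) = ennreal (a n) * K" for n
  proof -
    have "(\<integral>\<^sup>+\<omega>. ennreal (a n * dd (Y n \<omega>) powr (-g)) \<partial>M) = (\<integral>\<^sup>+\<omega>. ennreal (a n) * ennreal (dd (Y n \<omega>) powr (-g)) \<partial>M)"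
      using a0 by (simp add: ennreal_mult)
    also have "\<dots> = ennreal (a n) * (\<integral>\<^sup>+\<omega>. ennreal (dd (Y n \<omega>) powr (-g)) \<partial>M)"
      by (rule nn_integral_cmult) measurable
    also have "(\<integral>\<^sup>+\<omega>. ennreal (dd (Y n \<omega>) powr (-g)) \<partial>M) = K"
      unfolding K_def using distributed_nn_integral[OF Yd[of n], of "\<lambda>x. ennreal (dd x powr (-g))"] by simp
    finally show ?thesis .
  qed
  have "(\<integral>\<^sup>+\<omega>. (\<Sum>n. ennreal (a n * dd (Y n \<omega>) powr (-g))) \<partial>M) = (\<Sum>n. ennreal (a n) * K)"
    by (subst nn_integral_suminf) (auto simp: In)
  also have "\<dots> = (\<Sum>n. ennreal (a n)) * K" by simp
  also have "\<dots> < \<infinity>" using K ennreal_suminf_neq_top[OF sa a0]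
    by (simp add: ennreal_mult_less_top less_top)
  finally have "(\<integral>\<^sup>+\<omega>. (\<Sum>n. ennreal (a n * dd (Y n \<omega>) powr (-g))) \<partial>M) \<noteq> \<infinity>" by simp
  then have "AE \<omega> in M. (\<Sum>n. ennreal (a n * dd (Y n \<omega>) powr (-g))) \<noteq> \<infinity>"
    by (intro nn_integral_PInf_AE) measurable
  then show ?thesis
  proof eventually_elim
    case (elim \<omega>)
    show ?case by (rule summable_suminf_not_top) (use a0 elim in \<open>auto intro: mult_nonneg_nonneg\<close>)
  qed
qed


theorem theorem4:
  fixes M :: "'a measure" and Z Y :: "nat \<Rightarrow> 'a \<Rightarrow> real" and \<alpha> \<gamma> :: real
  assumes "prob_space M"
    and "0 < \<alpha>" "\<alpha> < 1" "0 < \<gamma>" "\<gamma> < 1"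
    and "\<And>n. distributed M lborel (Z n) (exponential_density 1)"
    and "\<And>n. distributed M lborel (Y n) (\<lambda>x. indicator {0..1} x / measure lborel {0..1::real})"
    and "prob_space.indep_vars M (\<lambda>_. borel) (case_sum Z Y) UNIV"
  shows "AE \<omega> in M. 0 < beta_crit \<alpha> \<gamma> Z Y \<omega>"
proof -
  interpret prob_space M by fact
  note Zd = assms(6) and Yd = assms(7)
  have indZ: "indep_vars (\<lambda>_. borel) Z UNIV" using assms(8) by (rule indep_Z)
  define a where "a n = (real n + 1) powr (-1/\<alpha>)" for n
  have a0: "0 \<le> a n" for n by (simp add: a_def)
  have "-1/\<alpha> < -1" using assms(2,3) by (simp add: field_simps)
  then have "summable (\<lambda>n. real n powr (-1/\<alpha>))" by (simp add: summable_real_powr_iff)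
  then have s1: "summable (\<lambda>n. real (n + 1) powr (-1/\<alpha>))" by (rule summable_ignore_initial_segment)
  have "a = (\<lambda>n. real (n + 1) powr (-1/\<alpha>))" by (rule ext) (simp add: a_def add.commute)
  then have sa: "summable a" using s1 by (simp only:)
  have AE1: "AE \<omega> in M. \<forall>n. Y n \<omega> \<in> {0<..<1}"
    unfolding AE_all_countable using Y_in01[OF Yd] by auto
  have AE2: "AE \<omega> in M. summable (\<lambda>n. a n * dd (Y n \<omega>) powr (-\<gamma>))"
    by (rule Y_weighted[OF Yd a0 sa assms(4,5)])
  have AE3: "AE \<omega> in M. eventually (\<lambda>n. (real n + 1)/2 < (\<Sum>j\<le>n. Z j \<omega>)) sequentially"
    by (rule T_eventually[OF Zd indZ])
  from AE1 AE2 AE3 show ?thesis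
  proof eventually_elim
    case (elim \<omega>)
    have "summable (\<lambda>n. (\<Sum>j\<le>n. Z j \<omega>) powr (-1/\<alpha>) * dd (Y n \<omega>) powr (-\<gamma>))"
    proof (rule summable_comparison_test_ev)
      show "summable (\<lambda>n. 2 powr (1/\<alpha>) * (a n * dd (Y n \<omega>) powr (-\<gamma>)))"
        using elim(2) by (rule summable_mult)
      show "eventually (\<lambda>n. norm ((\<Sum>j\<le>n. Z j \<omega>) powr (-1/\<alpha>) * dd (Y n \<omega>) powr (-\<gamma>))
          \<le> 2 powr (1/\<alpha>) * (a n * dd (Y n \<omega>) powr (-\<gamma>))) sequentially"
        using elim(3)
      proof eventually_elim
        case (elim n)
        have h: "0 < (real n + 1)/2" by simp
        have "(\<Sum>j\<le>n. Z j \<omega>) powr (-1/\<alpha>) \<le> ((real n + 1)/2) powr (-1/\<alpha>)"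
          using elim h assms(2) by (intro powr_mono2') auto
        also have "((real n + 1)/2) powr (-1/\<alpha>) = 2 powr (1/\<alpha>) * a n"
          using h by (simp add: a_def powr_divide powr_minus divide_simps)
        finally have le: "(\<Sum>j\<le>n. Z j \<omega>) powr (-1/\<alpha>) \<le> 2 powr (1/\<alpha>) * a n" .
        have "norm ((\<Sum>j\<le>n. Z j \<omega>) powr (-1/\<alpha>) * dd (Y n \<omega>) powr (-\<gamma>))
            = (\<Sum>j\<le>n. Z j \<omega>) powr (-1/\<alpha>) * dd (Y n \<omega>) powr (-\<gamma>)" by simp
        also have "\<dots> \<le> 2 powr (1/\<alpha>) * a n * dd (Y n \<omega>) powr (-\<gamma>)"
          using le by (intro mult_right_mono) auto
        finally show ?case by (simp add: mult.assoc)
      qed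
    qed
    then show ?case using det_main[OF assms(4,5), of Y \<omega> Z \<alpha>] elim(1) by blast
  qed
qed

end
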